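(* Let $r,k\geq 2$ be integers. Then $0\in D_{r,k}$, and whenever $d,d'\in D_{r,k}$ we have $d+d'\in D_{r,k}$.
   Context: For positive integers $v,b,r,k$, a $(v,b,r,k)$-configuration is a connected bipartite graph with $v$ vertices on one side, each of degree $r$, and $b$ vertices on the other side, each of degree $k$, containing no cycle of length $4$. By convention the empty graph (with $v=b=0$) is also regarded as a configuration. A tuple $(v,b,r,k)$ is configurable if a $(v,b,r,k)$-configuration exists. Let $\mathbb{N}_0=\{0,1,2,\dots\}$ and define $$D_{r,k}=\left\{d\in\mathbb{N}_0:\left(d\tfrac{k}{\gcd(r,k)},\,d\tfrac{r}{\gcd(r,k)},\,r,\,k\right)\text{ is configurable}\right\}.$$ *)

theory Defs
  imports Main
begin

text \<open>Vertices are represented by natural numbers;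
  the two sides are kept disjoint via the Inl/Inr tagging in the vertex set.\<close>

definition cfg_vertices :: "nat set \<Rightarrow> nat set \<Rightarrow> (nat + nat) set" where
  "cfg_vertices P B = Inl ` P \<union> Inr ` B"

definition cfg_adj :: "(nat \<times> nat) set \<Rightarrow> ((nat + nat) \<times> (nat + nat)) set" where
  "cfg_adj I = {(Inl p, Inr x) | p x. (p, x) \<in> I} \<union> {(Inr x, Inl p) | p x. (p, x) \<in> I}"

definition cfg_connected :: "nat set \<Rightarrow> nat set \<Rightarrow> (nat \<times> nat) set \<Rightarrow> bool" where
  "cfg_connected P B I \<longleftrightarrow>
     (\<forall>u \<in> cfg_vertices P B. \<forall>w \<in> cfg_vertices P B. (u, w) \<in> (cfg_adj I)\<^sup>*)"

definition no_C4 :: "(nat \<times> nat) set \<Rightarrow> bool" where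
  "no_C4 I \<longleftrightarrow> \<not> (\<exists>p1 p2 x1 x2. p1 \<noteq> p2 \<and> x1 \<noteq> x2 \<and>
       (p1, x1) \<in> I \<and> (p1, x2) \<in> I \<and> (p2, x1) \<in> I \<and> (p2, x2) \<in> I)"

definition is_configuration ::
  "nat \<Rightarrow> nat \<Rightarrow> nat \<Rightarrow> nat \<Rightarrow> nat set \<Rightarrow> nat set \<Rightarrow> (nat \<times> nat) set \<Rightarrow> bool" where
  "is_configuration v b r k P B I \<longleftrightarrow>
     finite P \<and> finite B \<and> I \<subseteq> P \<times> B \<and> card P = v \<and> card B = b \<and>
     (\<forall>p \<in> P. card {x \<in> B. (p, x) \<in> I} = r) \<and>
     (\<forall>x \<in> B. card {p \<in> P. (p, x) \<in> I} = k) \<and>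
     no_C4 I \<and> cfg_connected P B I"

text \<open>The empty graph (v = b = 0) satisfies this definition, matching the convention.\<close>
definition configurable :: "nat \<Rightarrow> nat \<Rightarrow> nat \<Rightarrow> nat \<Rightarrow> bool" where
  "configurable v b r k \<longleftrightarrow> (\<exists>P B I. is_configuration v b r k P B I)"

definition D_set :: "nat \<Rightarrow> nat \<Rightarrow> nat set" where
  "D_set r k = {d. configurable (d * (k div gcd r k)) (d * (r div gcd r k)) r k}"

end

theory Submission imports Defs begin

lemma nonbridge:
  fixes E :: "('a \<times> 'a) set"
  assumes fin: "finite V" and EV: "E \<subseteq> V \<times> V" and ne: "E \<noteq> {}"
  and irr: "\<And>u. (u,u) \<notin> E"
  and deg: "\<And>u w. (u,w) \<in> E \<Longrightarrow> \<exists>z. (w,z) \<in> E \<and> z \<noteq> u"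
  shows "\<exists>u w. (u,w) \<in> E \<and> (w,u) \<in> (E - {(u,w),(w,u)})\<^sup>*"
proof (rule ccontr)
  assume H: "\<not> ?thesis"
  define S where "S u w = {y. (w,y) \<in> (E - {(u,w),(w,u)})\<^sup>*}" for u w
  have SV: "S u w \<subseteq> V" if "(u,w)\<in>E" for u w
  proof
    fix y assume "y \<in> S u w"
    hence "(w,y) \<in> (E - {(u,w),(w,u)})\<^sup>*" by (simp add: S_def)
    thus "y \<in> V" using that EV
      by (induction rule: rtrancl_induct) auto
  qed
  define P where "P n = (\<exists>u w. (u,w)\<in>E \<and> card (S u w) = n)" for n
  have "\<exists>n. P n" using ne unfolding P_def by auto
  define n where "n = (LEAST n. P n)"
  have Pn: "P n" unfolding n_def using \<open>\<exists>n. P n\<close> by (metis LeastI_ex)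
  have minn: "n \<le> card (S u' w')" if "(u',w')\<in>E" for u' w'
    unfolding n_def by (rule Least_le) (use that P_def in auto)
  obtain u w where uw: "(u,w)\<in>E" "card (S u w) = n" using Pn P_def by auto
  obtain z where wz: "(w,z)\<in>E" "z \<noteq> u" using deg uw(1) by blast
  have bz: "(z,w) \<notin> (E - {(w,z),(z,w)})\<^sup>*" using H wz(1) by blast
  have sub: "S w z \<subseteq> S u w"
  proof
    fix y assume "y \<in> S w z"
    hence "(z,y) \<in> (E - {(w,z),(z,w)})\<^sup>*" by (simp add: S_def)
    hence "(w,y) \<in> (E - {(u,w),(w,u)})\<^sup>*"
    proof (induction rule: rtrancl_induct)
      case base
      then show ?case using wz by auto
    next
      case (step y1 y2)
      show ?case
      proof (cases "(y1,y2) \<in> E - {(u,w),(w,u)}")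
        case True
        then show ?thesis using step by (meson rtrancl.rtrancl_into_rtrancl)
      next
        case False
        hence "(y1,y2) = (u,w) \<or> (y1,y2) = (w,u)" using step by auto
        hence "(z,w) \<in> (E - {(w,z),(z,w)})\<^sup>*"
        proof
          assume "(y1,y2) = (u,w)" thus ?thesis using step irr[of u] wz(2)
            by (metis (no_types, lifting) Diff_iff insertE prod.inject rtrancl.rtrancl_into_rtrancl singletonD)
        next
          assume "(y1,y2) = (w,u)" thus ?thesis using step by auto
        qed
        then show ?thesis using bz by blast
      qed
    qed
    thus "y \<in> S u w" by (simp add: S_def)
  qed
  have "w \<in> S u w" by (simp add: S_def)
  moreover have "w \<notin> S w z" using bz by (simp add: S_def)
  ultimately have "S w z \<subset> S u w" using sub by blast
  hence "card (S w z) < card (S u w)"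
    using SV[OF uw(1)] fin by (meson finite_subset psubset_card_mono)
  thus False using minn[OF wz(1)] uw(2) by simp
qed

lemma relabel:
  assumes cfg: "is_configuration v b r k P B I" and inj: "inj f"
  shows "is_configuration v b r k (f`P) (f`B) (map_prod f f ` I)"
proof -
  define J where "J = map_prod f f ` I"
  have memJ: "(f a, f c) \<in> J \<longleftrightarrow> (a,c) \<in> I" for a c
    unfolding J_def using inj by (auto simp: inj_eq)
  have Jform: "y \<in> J \<Longrightarrow> \<exists>a c. y = (f a, f c) \<and> (a,c) \<in> I" for y
    unfolding J_def by auto
  from cfg have fin: "finite P" "finite B" and IPB: "I \<subseteq> P \<times> B" and cP: "card P = v"
    and cB: "card B = b" and dP: "\<forall>p \<in> P. card {x \<in> B. (p, x) \<in> I} = r"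
    and dB: "\<forall>x \<in> B. card {p \<in> P. (p, x) \<in> I} = k"
    and c4: "no_C4 I" and con: "cfg_connected P B I"
    unfolding is_configuration_def by auto
  have "J \<subseteq> f`P \<times> f`B" using IPB unfolding J_def by auto
  moreover have "card (f`P) = v" "card (f`B) = b" using cP cB inj
    by (auto simp: card_image inj_on_subset)
  moreover have "\<forall>p \<in> f`P. card {x \<in> f`B. (p, x) \<in> J} = r"
  proof
    fix p assume "p \<in> f`P"
    then obtain q where q: "q \<in> P" "p = f q" by auto
    have "{x \<in> f`B. (p, x) \<in> J} = f ` {x \<in> B. (q, x) \<in> I}"
      using q memJ by auto
    thus "card {x \<in> f`B. (p, x) \<in> J} = r" using dP q inj
      by (simp add: card_image inj_on_subset)
  qed
  moreover have "\<forall>x \<in> f`B. card {p \<in> f`P. (p, x) \<in> J} = k"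
  proof
    fix x assume "x \<in> f`B"
    then obtain q where q: "q \<in> B" "x = f q" by auto
    have "{p \<in> f`P. (p, x) \<in> J} = f ` {p \<in> P. (p, q) \<in> I}"
      using q memJ by auto
    thus "card {p \<in> f`P. (p, x) \<in> J} = k" using dB q inj
      by (simp add: card_image inj_on_subset)
  qed
  moreover have "no_C4 J"
    unfolding no_C4_def
  proof clarify
    fix p1 p2 x1 x2 assume h: "p1 \<noteq> p2" "x1 \<noteq> x2" "(p1, x1) \<in> J" "(p1, x2) \<in> J"
      "(p2, x1) \<in> J" "(p2, x2) \<in> J"
    obtain a1 c1 where 1: "p1 = f a1" "x1 = f c1" using Jform[OF h(3)] by auto
    obtain a2 c2 where 2: "p2 = f a2" "x2 = f c2" using Jform[OF h(6)] by auto
    have "(a1,c1) \<in> I" "(a1,c2) \<in> I" "(a2,c1) \<in> I" "(a2,c2) \<in> I"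
      using h 1 2 memJ by auto
    moreover have "a1 \<noteq> a2" "c1 \<noteq> c2" using h 1 2 by auto
    ultimately show False using c4 unfolding no_C4_def by blast
  qed
  moreover have "cfg_connected (f`P) (f`B) J"
    unfolding cfg_connected_def
  proof (intro ballI)
    let ?g = "map_sum f f"
    have V: "cfg_vertices (f`P) (f`B) = ?g ` cfg_vertices P B"
      unfolding cfg_vertices_def by (auto simp: image_Un image_image)
    have adj: "(?g y1, ?g y2) \<in> cfg_adj J" if "(y1,y2) \<in> cfg_adj I" for y1 y2
      using that memJ unfolding cfg_adj_def by auto
    fix u' w' assume "u' \<in> cfg_vertices (f`P) (f`B)" "w' \<in> cfg_vertices (f`P) (f`B)"
    then obtain u w where uw: "u \<in> cfg_vertices P B" "w \<in> cfg_vertices P B"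
      "u' = ?g u" "w' = ?g w" using V by auto
    have "(u,w) \<in> (cfg_adj I)\<^sup>*" using con uw unfolding cfg_connected_def by auto
    hence "(?g u, ?g w) \<in> (cfg_adj J)\<^sup>*"
      by (induction rule: rtrancl_induct) (auto intro: rtrancl_into_rtrancl adj)
    thus "(u', w') \<in> (cfg_adj J)\<^sup>*" using uw by simp
  qed
  ultimately show ?thesis using fin unfolding is_configuration_def J_def by auto
qed

lemma two_elems:
  assumes "finite A" "card A \<ge> 2" shows "\<exists>y\<in>A. y \<noteq> a"
proof (rule ccontr)
  assume "\<not> ?thesis" hence "A \<subseteq> {a}" by auto
  hence "card A \<le> 1" using card_mono[of "{a}" A] by auto
  thus False using assms by simp
qed

lemma adj_sym: "(a,b) \<in> (cfg_adj J)\<^sup>* \<Longrightarrow> (b,a) \<in> (cfg_adj J)\<^sup>*"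
proof -
  have "(cfg_adj J)\<inverse> = cfg_adj J" unfolding cfg_adj_def by auto
  moreover assume "(a,b) \<in> (cfg_adj J)\<^sup>*"
  ultimately show ?thesis by (metis rtrancl_converseI)
qed

lemma adj_remove: "cfg_adj (I - {(p,x)}) = cfg_adj I - {(Inl p, Inr x),(Inr x, Inl p)}"
  unfolding cfg_adj_def by auto

lemma nb_edge:
  assumes cfg: "is_configuration v b r k P B I" and r: "r \<ge> 2" and k: "k \<ge> 2"
    and ne: "P \<noteq> {}"
  shows "\<exists>p x. (p,x) \<in> I \<and> (\<forall>u\<in>cfg_vertices P B. \<forall>w\<in>cfg_vertices P B.
           (u,w) \<in> (cfg_adj (I - {(p,x)}))\<^sup>*)"
proof -
  from cfg have fin: "finite P" "finite B" and IPB: "I \<subseteq> P \<times> B"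
    and dP: "\<forall>p \<in> P. card {x \<in> B. (p, x) \<in> I} = r"
    and dB: "\<forall>x \<in> B. card {p \<in> P. (p, x) \<in> I} = k"
    and con: "cfg_connected P B I"
    unfolding is_configuration_def by auto
  let ?E = "cfg_adj I" and ?V = "cfg_vertices P B"
  have finV: "finite ?V" using fin unfolding cfg_vertices_def by auto
  have EV: "?E \<subseteq> ?V \<times> ?V" using IPB unfolding cfg_adj_def cfg_vertices_def by auto
  have irr: "(u,u) \<notin> ?E" for u unfolding cfg_adj_def by auto
  have nbp: "\<exists>y. y \<noteq> a \<and> (q,y) \<in> I" if qP: "q \<in> P" for q a
  proof -
    have "finite {x \<in> B. (q, x) \<in> I}" using fin by auto
    then obtain y where "y \<in> {x \<in> B. (q, x) \<in> I}" "y \<noteq> a"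
      using two_elems[of "{x \<in> B. (q, x) \<in> I}" a] dP qP r by auto
    thus ?thesis by auto
  qed
  have nbx: "\<exists>y. y \<noteq> a \<and> (y,q) \<in> I" if qB: "q \<in> B" for q a
  proof -
    have "finite {p \<in> P. (p, q) \<in> I}" using fin by auto
    then obtain y where "y \<in> {p \<in> P. (p, q) \<in> I}" "y \<noteq> a"
      using two_elems[of "{p \<in> P. (p, q) \<in> I}" a] dB qB k by auto
    thus ?thesis by auto
  qed
  obtain p0 where "p0 \<in> P" using ne by auto
  then obtain x0 where "(p0,x0) \<in> I" using nbp by blast
  hence Ene: "?E \<noteq> {}" unfolding cfg_adj_def by auto
  have deg: "\<exists>z. (w,z) \<in> ?E \<and> z \<noteq> u" if "(u,w) \<in> ?E" for u w
  proof -
    from that consider (a) p x where "u = Inl p" "w = Inr x" "(p,x) \<in> I"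
      | (b) p x where "u = Inr x" "w = Inl p" "(p,x) \<in> I"
      unfolding cfg_adj_def by auto
    then show ?thesis
    proof cases
      case a
      then obtain y where "y \<noteq> p" "(y,x) \<in> I" using nbx IPB by blast
      thus ?thesis using a unfolding cfg_adj_def by auto
    next
      case b
      then obtain y where "y \<noteq> x" "(p,y) \<in> I" using nbp IPB by blast
      thus ?thesis using b unfolding cfg_adj_def by auto
    qed
  qed
  obtain u w where uw: "(u,w) \<in> ?E" "(w,u) \<in> (?E - {(u,w),(w,u)})\<^sup>*"
    using nonbridge[OF finV EV Ene irr deg] by blast
  obtain p x where px: "(p,x) \<in> I" "(Inr x, Inl p) \<in> (cfg_adj (I - {(p,x)}))\<^sup>*"
  proof -
    from uw(1) consider (a) p x where "u = Inl p" "w = Inr x" "(p,x) \<in> I"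
      | (b) p x where "u = Inr x" "w = Inl p" "(p,x) \<in> I"
      unfolding cfg_adj_def by auto
    then show ?thesis
    proof cases
      case a
      then show ?thesis using that uw(2) adj_remove[of I p x] by auto
    next
      case b
      then have "(Inl p, Inr x) \<in> (cfg_adj (I - {(p,x)}))\<^sup>*"
        using uw(2) adj_remove[of I p x] by (simp add: insert_commute)
      then show ?thesis using that b adj_sym by blast
    qed
  qed
  have px2: "(Inl p, Inr x) \<in> (cfg_adj (I - {(p,x)}))\<^sup>*" using px(2) adj_sym by blast
  have "?E \<subseteq> (cfg_adj (I - {(p,x)}))\<^sup>*"
  proof
    fix e assume "e \<in> ?E"
    show "e \<in> (cfg_adj (I - {(p,x)}))\<^sup>*"
    proof (cases "e \<in> {(Inl p, Inr x),(Inr x, Inl p)}")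
      case True thus ?thesis using px(2) px2 by auto
    next
      case False thus ?thesis using \<open>e \<in> ?E\<close> adj_remove[of I p x] by auto
    qed
  qed
  hence "?E\<^sup>* \<subseteq> (cfg_adj (I - {(p,x)}))\<^sup>*" by (rule rtrancl_subset_rtrancl)
  thus ?thesis using px(1) con unfolding cfg_connected_def by blast
qed

lemma card_swap:
  assumes "finite A" "a \<in> A" "c \<notin> A"
  shows "card (insert c (A - {a})) = card A"
proof -
  have "card (insert c (A - {a})) = Suc (card (A - {a}))"
    using assms by (simp add: card_insert_disjoint)
  also have "\<dots> = card A" using assms card_Diff_singleton
    by (metis One_nat_def Suc_pred card_gt_0_iff empty_iff)
  finally show ?thesis .
qed

lemma combine:
  assumes c1: "is_configuration v1 b1 r k P1 B1 I1"
    and c2: "is_configuration v2 b2 r k P2 B2 I2"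
    and dPP: "P1 \<inter> P2 = {}" and dBB: "B1 \<inter> B2 = {}" and r: "r \<ge> 2" and k: "k \<ge> 2"
    and ne1: "P1 \<noteq> {}" and ne2: "P2 \<noteq> {}"
  shows "configurable (v1+v2) (b1+b2) r k"
proof -
  from c1 have fin1: "finite P1" "finite B1" and IPB1: "I1 \<subseteq> P1 \<times> B1" and cP1: "card P1 = v1"
    and cB1: "card B1 = b1" and dP1: "\<forall>p \<in> P1. card {x \<in> B1. (p, x) \<in> I1} = r"
    and dB1: "\<forall>x \<in> B1. card {p \<in> P1. (p, x) \<in> I1} = k"
    and c41: "no_C4 I1"
    unfolding is_configuration_def by auto
  from c2 have fin2: "finite P2" "finite B2" and IPB2: "I2 \<subseteq> P2 \<times> B2" and cP2: "card P2 = v2"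
    and cB2: "card B2 = b2" and dP2: "\<forall>p \<in> P2. card {x \<in> B2. (p, x) \<in> I2} = r"
    and dB2: "\<forall>x \<in> B2. card {p \<in> P2. (p, x) \<in> I2} = k"
    and c42: "no_C4 I2"
    unfolding is_configuration_def by auto
  obtain p x where px: "(p,x) \<in> I1" and con1: "\<forall>u\<in>cfg_vertices P1 B1. \<forall>w\<in>cfg_vertices P1 B1.
           (u,w) \<in> (cfg_adj (I1 - {(p,x)}))\<^sup>*" using nb_edge[OF c1 r k ne1] by blast
  obtain p' x' where px': "(p',x') \<in> I2" and con2: "\<forall>u\<in>cfg_vertices P2 B2. \<forall>w\<in>cfg_vertices P2 B2.
           (u,w) \<in> (cfg_adj (I2 - {(p',x')}))\<^sup>*" using nb_edge[OF c2 r k ne2] by blast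
  have mem: "p \<in> P1" "x \<in> B1" "p' \<in> P2" "x' \<in> B2" using px px' IPB1 IPB2 by auto
  define I where "I = (I1 - {(p,x)}) \<union> (I2 - {(p',x')}) \<union> {(p,x'),(p',x)}"
  have Ichar: "(a,y) \<in> I \<longleftrightarrow> ((a,y) \<in> I1 \<and> (a,y) \<noteq> (p,x)) \<or> ((a,y) \<in> I2 \<and> (a,y) \<noteq> (p',x'))
      \<or> (a,y) = (p,x') \<or> (a,y) = (p',x)" for a y
    unfolding I_def by auto
  let ?P = "P1 \<union> P2" and ?B = "B1 \<union> B2"
  have sub: "I \<subseteq> ?P \<times> ?B" unfolding I_def using IPB1 IPB2 mem by auto
  have cards: "card ?P = v1 + v2" "card ?B = b1 + b2"
    using fin1 fin2 dPP dBB cP1 cP2 cB1 cB2 by (auto simp: card_Un_disjoint)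
  have degP: "card {y \<in> ?B. (q, y) \<in> I} = r" if q: "q \<in> ?P" for q
  proof -
    consider "q \<in> P1" "q \<noteq> p" | "q = p" | "q \<in> P2" "q \<noteq> p'" | "q = p'" using q by auto
    then show ?thesis
    proof cases
      case 1
      hence "{y \<in> ?B. (q, y) \<in> I} = {y \<in> B1. (q, y) \<in> I1}"
        using IPB1 IPB2 dPP dBB mem unfolding I_def by auto
      thus ?thesis using dP1 1 by simp
    next
      case 2
      hence "{y \<in> ?B. (q, y) \<in> I} = insert x' ({y \<in> B1. (p, y) \<in> I1} - {x})"
        using IPB1 IPB2 dPP dBB mem unfolding I_def by auto
      thus ?thesis using dP1 mem px card_swap[of "{y \<in> B1. (p, y) \<in> I1}" x x'] fin1 dBB
        by auto
    next
      case 3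
      hence "{y \<in> ?B. (q, y) \<in> I} = {y \<in> B2. (q, y) \<in> I2}"
        using IPB1 IPB2 dPP dBB mem unfolding I_def by auto
      thus ?thesis using dP2 3 by simp
    next
      case 4
      hence "{y \<in> ?B. (q, y) \<in> I} = insert x ({y \<in> B2. (p', y) \<in> I2} - {x'})"
        using IPB1 IPB2 dPP dBB mem unfolding I_def by auto
      thus ?thesis using dP2 mem px' card_swap[of "{y \<in> B2. (p', y) \<in> I2}" x' x] fin2 dBB
        by auto
    qed
  qed
  have degB: "card {q \<in> ?P. (q, y) \<in> I} = k" if y: "y \<in> ?B" for y
  proof -
    consider "y \<in> B1" "y \<noteq> x" | "y = x" | "y \<in> B2" "y \<noteq> x'" | "y = x'" using y by auto
    then show ?thesis
    proof cases
      case 1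
      hence "{q \<in> ?P. (q, y) \<in> I} = {q \<in> P1. (q, y) \<in> I1}"
        using IPB1 IPB2 dPP dBB mem unfolding I_def by auto
      thus ?thesis using dB1 1 by simp
    next
      case 2
      hence "{q \<in> ?P. (q, y) \<in> I} = insert p' ({q \<in> P1. (q, x) \<in> I1} - {p})"
        using IPB1 IPB2 dPP dBB mem unfolding I_def by auto
      thus ?thesis using dB1 mem px card_swap[of "{q \<in> P1. (q, x) \<in> I1}" p p'] fin1 dPP
        by auto
    next
      case 3
      hence "{q \<in> ?P. (q, y) \<in> I} = {q \<in> P2. (q, y) \<in> I2}"
        using IPB1 IPB2 dPP dBB mem unfolding I_def by auto
      thus ?thesis using dB2 3 by simp
    next
      case 4
      hence "{q \<in> ?P. (q, y) \<in> I} = insert p ({q \<in> P2. (q, x') \<in> I2} - {p'})"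
        using IPB1 IPB2 dPP dBB mem unfolding I_def by auto
      thus ?thesis using dB2 mem px' card_swap[of "{q \<in> P2. (q, x') \<in> I2}" p' p] fin2 dPP
        by auto
    qed
  qed
  have c4: "no_C4 I"
    unfolding no_C4_def
  proof clarify
    fix p1 p2 x1 x2 assume h: "p1 \<noteq> p2" "x1 \<noteq> x2" "(p1, x1) \<in> I" "(p1, x2) \<in> I"
      "(p2, x1) \<in> I" "(p2, x2) \<in> I"
    have e1: "(a,y) \<in> I1" if "(a,y) \<in> I" "a \<in> P1" "y \<in> B1" for a y
      using that Ichar[of a y] IPB2 dPP dBB mem by auto
    have e2: "(a,y) \<in> I2" if "(a,y) \<in> I" "a \<in> P2" "y \<in> B2" for a y
      using that Ichar[of a y] IPB1 dPP dBB mem by auto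
    have m12: "a = p \<and> y = x'" if "(a,y) \<in> I" "a \<in> P1" "y \<in> B2" for a y
      using that Ichar[of a y] IPB1 IPB2 dPP dBB mem by auto
    have m21: "a = p' \<and> y = x" if "(a,y) \<in> I" "a \<in> P2" "y \<in> B1" for a y
      using that Ichar[of a y] IPB1 IPB2 dPP dBB mem by auto
    have nopx: "(p,x) \<notin> I" using Ichar[of p x] IPB2 dPP dBB mem by auto
    have inP: "a \<in> ?P" "y \<in> ?B" if "(a,y) \<in> I" for a y using that sub by auto
    show False
    proof (cases "p1 \<in> P1")
      case p1: True
      show False
      proof (cases "p2 \<in> P1")
        case True
        have "x1 \<in> B1" using m12 h p1 True inP by blast
        moreover have "x2 \<in> B1" using m12 h p1 True inP by blast
        ultimately show False using c41 e1 h p1 True unfolding no_C4_def by blast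
      next
        case False
        hence p2: "p2 \<in> P2" using inP h by blast
        have "x1 = x \<or> x1 = x'" using m12 m21 h p1 p2 inP by blast
        moreover have "x2 = x \<or> x2 = x'" using m12 m21 h p1 p2 inP by blast
        ultimately have "(p1 = p \<and> (p1,x) \<in> I)" using m12 h p1 mem by metis
        thus False using nopx by blast
      qed
    next
      case p1: False
      hence p1': "p1 \<in> P2" using inP h by blast
      show False
      proof (cases "p2 \<in> P2")
        case True
        have "x1 \<in> B2" using m21 h p1' True inP by blast
        moreover have "x2 \<in> B2" using m21 h p1' True inP by blast
        ultimately show False using c42 e2 h p1' True unfolding no_C4_def by blast
      next
        case False
        hence p2: "p2 \<in> P1" using inP h by blast
        have "x1 = x \<or> x1 = x'" using m12 m21 h p1' p2 inP by blast
        moreover have "x2 = x \<or> x2 = x'" using m12 m21 h p1' p2 inP by blast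
        ultimately have "(p2 = p \<and> (p2,x) \<in> I)" using m12 h p2 mem by metis
        thus False using nopx by blast
      qed
    qed
  qed
  have con: "cfg_connected ?P ?B I"
  proof -
    let ?R = "cfg_adj I"
    have s1: "cfg_adj (I1 - {(p,x)}) \<subseteq> ?R" "cfg_adj (I2 - {(p',x')}) \<subseteq> ?R"
      unfolding cfg_adj_def I_def by auto
    have r1: "(u,w) \<in> ?R\<^sup>*" if "u \<in> cfg_vertices P1 B1" "w \<in> cfg_vertices P1 B1" for u w
      using con1 that rtrancl_mono[OF s1(1)] by blast
    have r2: "(u,w) \<in> ?R\<^sup>*" if "u \<in> cfg_vertices P2 B2" "w \<in> cfg_vertices P2 B2" for u w
      using con2 that rtrancl_mono[OF s1(2)] by blast
    have br: "(Inl p, Inr x') \<in> ?R" "(Inr x', Inl p) \<in> ?R" unfolding cfg_adj_def I_def by auto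
    have v: "Inl p \<in> cfg_vertices P1 B1" "Inr x' \<in> cfg_vertices P2 B2"
      using mem unfolding cfg_vertices_def by auto
    have V: "cfg_vertices ?P ?B = cfg_vertices P1 B1 \<union> cfg_vertices P2 B2"
      unfolding cfg_vertices_def by auto
    show ?thesis unfolding cfg_connected_def V
    proof (intro ballI)
      fix u w assume u: "u \<in> cfg_vertices P1 B1 \<union> cfg_vertices P2 B2"
        and w: "w \<in> cfg_vertices P1 B1 \<union> cfg_vertices P2 B2"
      show "(u,w) \<in> ?R\<^sup>*"
      proof (cases "u \<in> cfg_vertices P1 B1")
        case uu: True
        show ?thesis
        proof (cases "w \<in> cfg_vertices P1 B1")
          case True thus ?thesis using r1 uu by blast
        next
          case False
          hence "w \<in> cfg_vertices P2 B2" using w by blast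
          hence "(u, Inl p) \<in> ?R\<^sup>*" "(Inr x', w) \<in> ?R\<^sup>*" using r1 r2 uu v by auto
          thus ?thesis using br by (meson converse_rtrancl_into_rtrancl rtrancl_trans)
        qed
      next
        case False
        hence uu: "u \<in> cfg_vertices P2 B2" using u by blast
        show ?thesis
        proof (cases "w \<in> cfg_vertices P2 B2")
          case True thus ?thesis using r2 uu by blast
        next
          case False
          hence "w \<in> cfg_vertices P1 B1" using w by blast
          hence "(u, Inr x') \<in> ?R\<^sup>*" "(Inl p, w) \<in> ?R\<^sup>*" using r1 r2 uu v by auto
          thus ?thesis using br by (meson converse_rtrancl_into_rtrancl rtrancl_trans)
        qed
      qed
    qed
  qed
  have "is_configuration (v1+v2) (b1+b2) r k ?P ?B I"
    unfolding is_configuration_def using fin1 fin2 sub cards degP degB c4 con by auto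
  thus ?thesis unfolding configurable_def by blast
qed

theorem lemma6:
  fixes r k :: nat
  assumes "r \<ge> 2" and "k \<ge> 2"
  shows "0 \<in> D_set r k \<and> (\<forall>d \<in> D_set r k. \<forall>d' \<in> D_set r k. d + d' \<in> D_set r k)"
proof
  have "is_configuration 0 0 r k {} {} {}"
    unfolding is_configuration_def no_C4_def cfg_connected_def cfg_vertices_def by auto
  thus "0 \<in> D_set r k" unfolding D_set_def configurable_def by auto
next
  let ?a = "k div gcd r k" and ?c = "r div gcd r k"
  have apos: "?a > 0" using assms
    by (metis div_greater_zero_iff gcd_le2_nat gcd_pos_nat not_numeral_le_zero zero_less_iff_neq_zero)
  show "\<forall>d \<in> D_set r k. \<forall>d' \<in> D_set r k. d + d' \<in> D_set r k"
  proof (intro ballI)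
    fix d d' assume d: "d \<in> D_set r k" and d': "d' \<in> D_set r k"
    show "d + d' \<in> D_set r k"
    proof (cases "d = 0 \<or> d' = 0")
      case True thus ?thesis using d d' by auto
    next
      case False
      obtain P1 B1 I1 where c1: "is_configuration (d * ?a) (d * ?c) r k P1 B1 I1"
        using d unfolding D_set_def configurable_def by auto
      obtain P2 B2 I2 where c2: "is_configuration (d' * ?a) (d' * ?c) r k P2 B2 I2"
        using d' unfolding D_set_def configurable_def by auto
      define f1 where "f1 = (\<lambda>n::nat. 2*n)"
      define f2 where "f2 = (\<lambda>n::nat. 2*n+1)"
      have i1: "inj f1" unfolding f1_def inj_def by auto
      have i2: "inj f2" unfolding f2_def inj_def by auto
      have disj: "f1 ` X \<inter> f2 ` Y = {}" for X Y unfolding f1_def f2_def by auto presburger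
      have c1': "is_configuration (d * ?a) (d * ?c) r k (f1`P1) (f1`B1) (map_prod f1 f1 ` I1)"
        using relabel[OF c1 i1] .
      have c2': "is_configuration (d' * ?a) (d' * ?c) r k (f2`P2) (f2`B2) (map_prod f2 f2 ` I2)"
        using relabel[OF c2 i2] .
      have ne1: "f1`P1 \<noteq> {}"
      proof
        assume "f1`P1 = {}"
        hence "card (f1`P1) = 0" by simp
        thus False using c1' False apos unfolding is_configuration_def by simp
      qed
      have ne2: "f2`P2 \<noteq> {}"
      proof
        assume "f2`P2 = {}"
        hence "card (f2`P2) = 0" by simp
        thus False using c2' False apos unfolding is_configuration_def by simp
      qed
      have "configurable (d * ?a + d' * ?a) (d * ?c + d' * ?c) r k"
        using combine[OF c1' c2' disj disj assms ne1 ne2] .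
      thus ?thesis unfolding D_set_def by (simp add: add_mult_distrib)
    qed
  qed
qed

end
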